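(* Let $v\in C(S^1,(0,\infty))$ be separable in $S^1$ and suppose $v((\cos\alpha,\sin\alpha))=v((\cos(\alpha+\pi),\sin(\alpha+\pi)))$ for every $\alpha\in[0,2\pi)$. Then $v$ is constant on $S^1$.
   Context: $S^1\subset\mathbb{R}^2$ is the unit circle. For $\alpha\in\mathbb{R}$, $S^1_\alpha=\{(\cos(\alpha+\theta),\sin(\alpha+\theta)):\theta\in(0,\pi)\}$, and for $x\in S^1$, $l_\alpha(x)$ denotes the reflection of $x$ across the line through the origin with direction $(\cos\alpha,\sin\alpha)$. A function $v\in C(S^1,\mathbb{R})$ is called separable in $S^1$ if for every $\alpha\in[0,2\pi)$, either $v(l_\alpha(x))\ge v(x)$ for all $x\in S^1_\alpha$, or $v(l_\alpha(x))\le v(x)$ for all $x\in S^1_\alpha$. *)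

theory Defs
  imports "HOL-Analysis.Analysis"
begin

definition S1 :: "(real \<times> real) set" where
  "S1 = {p. (fst p)\<^sup>2 + (snd p)\<^sup>2 = 1}"

definition S1_half :: "real \<Rightarrow> (real \<times> real) set" where
  "S1_half \<alpha> = {(cos (\<alpha> + \<theta>), sin (\<alpha> + \<theta>)) | \<theta>. \<theta> \<in> {0<..<pi}}"

text \<open>Reflection across the line through the origin with direction (cos a, sin a):
  l(x) = 2 (x . u) u - x.\<close>
definition refl_line :: "real \<Rightarrow> real \<times> real \<Rightarrow> real \<times> real" where
  "refl_line \<alpha> p =
     (let d = fst p * cos \<alpha> + snd p * sin \<alpha>
      in (2 * d * cos \<alpha> - fst p, 2 * d * sin \<alpha> - snd p))"

definition separable_S1 :: "(real \<times> real \<Rightarrow> real) \<Rightarrow> bool" where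
  "separable_S1 v \<longleftrightarrow>
     (\<forall>\<alpha>\<in>{0..<2*pi}.
        (\<forall>x\<in>S1_half \<alpha>. v (refl_line \<alpha> x) \<ge> v x) \<or>
        (\<forall>x\<in>S1_half \<alpha>. v (refl_line \<alpha> x) \<le> v x))"

end

theory Submission
  imports Defs
begin

lemma refl_angle:
  "refl_line a (cos (a + th), sin (a + th)) = (cos (a - th), sin (a - th))"
proof -
  have d: "cos (a + th) * cos a + sin (a + th) * sin a = cos th"
    using cos_diff[of "a + th" a] by simp
  have e1: "2 * cos th * cos a - cos (a + th) = cos (a - th)"
    by (simp add: cos_add cos_diff algebra_simps)
  have e2: "2 * cos th * sin a - sin (a + th) = sin (a - th)"
    by (simp add: sin_add sin_diff algebra_simps)
  show ?thesis
    unfolding refl_line_def Let_def d fst_conv snd_conv e1 e2 ..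
qed

lemma in_half: "th \<in> {0<..<pi} \<Longrightarrow> (cos (a + th), sin (a + th)) \<in> S1_half a"
  unfolding S1_half_def by blast

theorem corollary2p2:
  fixes v :: "real \<times> real \<Rightarrow> real"
  assumes "continuous_on S1 v"
    and "\<forall>x\<in>S1. v x > 0"
    and "separable_S1 v"
    and "\<forall>\<alpha>\<in>{0..<2*pi}. v (cos \<alpha>, sin \<alpha>) = v (cos (\<alpha> + pi), sin (\<alpha> + pi))"
  shows "\<exists>c. \<forall>x\<in>S1. v x = c"
proof -
  define f where "f t = v (cos t, sin t)" for t
  have per: "f t = f (t + pi)" if "0 \<le> t" "t < 2*pi" for t
    using assms(4) that unfolding f_def by auto
  have f0: "f pi = f 0" using per[of 0] by simp
  have fm: "f (t - pi) = f t" if "0 < t" "t < 2*pi" for t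
  proof (cases "t \<ge> pi")
    case True
    then show ?thesis using per[of "t - pi"] that by simp
  next
    case False
    have "f (t - pi) = f (t + pi)"
      unfolding f_def using cos_periodic[of "t - pi"] sin_periodic[of "t - pi"]
      by (simp add: algebra_simps)
    also have "\<dots> = f t" using per[of t] that by simp
    finally show ?thesis .
  qed
  have main: "f t = f 0" if t: "0 < t" "t < 2*pi" for t
  proof -
    define a where "a = t / 2"
    have a: "a \<in> {0..<2*pi}" "0 < a" "a < pi" using t pi_gt_zero unfolding a_def by auto
    have key: "f (a - th) \<le> f (a + th) \<and> f (a - th) \<ge> f (a + th) \<longrightarrow> True" for th by simp
    from assms(3) a(1) have
      "(\<forall>x\<in>S1_half a. v (refl_line a x) \<ge> v x) \<or> (\<forall>x\<in>S1_half a. v (refl_line a x) \<le> v x)"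
      unfolding separable_S1_def by blast
    hence "(\<forall>th\<in>{0<..<pi}. f (a - th) \<ge> f (a + th)) \<or> (\<forall>th\<in>{0<..<pi}. f (a - th) \<le> f (a + th))"
      unfolding f_def using in_half refl_angle by metis
    moreover have "a \<in> {0<..<pi}" "pi - a \<in> {0<..<pi}" using a by auto
    moreover have "a - a = 0" "a + a = t" "a - (pi - a) = t - pi" "a + (pi - a) = pi"
      unfolding a_def by auto
    ultimately show ?thesis using fm[OF t] f0 by (smt (verit))
  qed
  show ?thesis
  proof (intro exI ballI)
    fix x assume "x \<in> S1"
    then have "(fst x)\<^sup>2 + (snd x)\<^sup>2 = 1" unfolding S1_def by simp
    then obtain t where t: "0 \<le> t" "t < 2*pi" "fst x = cos t" "snd x = sin t"
      by (rule sincos_total_2pi)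
    have "x = (cos t, sin t)" using t by (simp add: prod_eq_iff)
    then have "v x = f t" unfolding f_def by simp
    also have "\<dots> = f 0" using main[of t] t by (cases "t = 0") auto
    finally show "v x = f 0" .
  qed
qed

end
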